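(* Let $n\in\mathbb{N}$, let $G=\mathbb{Z}_3^n$ be the elementary abelian $3$-group of rank $n$ (written multiplicatively), let $S$ be a sum-free set in $G$, and let $x\in S$. Then: (i) any two of the sets $S$, $x^{-1}S$, $xS$ are disjoint; (ii) any two of the sets $S$, $SS^{-1}$, $S^{-1}$ are disjoint. Moreover, if $S$ is a maximal sum-free set in $G$, then: (iii) $S\cup x^{-1}S\cup xS=G$ and $|S|=\frac{|G|}{3}$; (iv) $S\cup SS^{-1}\cup S^{-1}=G$.
   Context: A non-empty subset $S$ of a group $G$ is called sum-free if for all $s_1,s_2\in S$ (including the case $s_1=s_2$) one has $s_1s_2\notin S$. A maximal sum-free set in a finite group $G$ means a sum-free set of largest possible cardinality among all sum-free sets in $G$. Notation: $xS=\{xs: s\in S\}$, $x^{-1}S=\{x^{-1}s : s\in S\}$, $S^{-1}=\{s^{-1}: s\in S\}$, $SS^{-1}=\{st^{-1}: s,t\in S\}$. *)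

theory Defs
  imports "HOL-Algebra.Algebra"
begin

text \<open>The elementary abelian 3-group Z_3^n, written multiplicatively:
  elements are vectors (coordinates 0..n-1 in {0,1,2}, zero outside),
  multiplication is coordinatewise addition modulo 3.\<close>
definition Z3n_carrier :: "nat \<Rightarrow> (nat \<Rightarrow> int) set" where
  "Z3n_carrier n = {f. (\<forall>i<n. f i \<in> {0, 1, 2}) \<and> (\<forall>i. n \<le> i \<longrightarrow> f i = 0)}"

definition Z3n_mult :: "nat \<Rightarrow> (nat \<Rightarrow> int) \<Rightarrow> (nat \<Rightarrow> int) \<Rightarrow> (nat \<Rightarrow> int)" where
  "Z3n_mult n f g = (\<lambda>i. if i < n then (f i + g i) mod 3 else 0)"

definition Z3n :: "nat \<Rightarrow> (nat \<Rightarrow> int) monoid" where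
  "Z3n n = \<lparr>carrier = Z3n_carrier n, monoid.mult = Z3n_mult n, monoid.one = (\<lambda>i. 0)\<rparr>"

definition sum_free :: "('a, 'b) monoid_scheme \<Rightarrow> 'a set \<Rightarrow> bool" where
  "sum_free G S \<longleftrightarrow> S \<noteq> {} \<and> S \<subseteq> carrier G \<and>
     (\<forall>s1\<in>S. \<forall>s2\<in>S. s1 \<otimes>\<^bsub>G\<^esub> s2 \<notin> S)"

definition max_sum_free :: "('a, 'b) monoid_scheme \<Rightarrow> 'a set \<Rightarrow> bool" where
  "max_sum_free G S \<longleftrightarrow> sum_free G S \<and> (\<forall>T. sum_free G T \<longrightarrow> card T \<le> card S)"

end

theory Submission imports Defs begin

lemma Z3_mem: "f \<in> carrier (Z3n n) \<longleftrightarrow> (\<forall>i<n. f i \<in> {0,1,2}) \<and> (\<forall>i. n \<le> i \<longrightarrow> f i = 0)"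
  by (simp add: Z3n_def Z3n_carrier_def)
lemma Z3_mult: "f \<otimes>\<^bsub>Z3n n\<^esub> g = (\<lambda>i. if i < n then (f i + g i) mod 3 else 0)"
  by (simp add: Z3n_def Z3n_mult_def)
lemma Z3_one: "\<one>\<^bsub>Z3n n\<^esub> = (\<lambda>i. 0)"
  by (simp add: Z3n_def)

lemma Z3_comm_group: "comm_group (Z3n n)"
proof (rule comm_groupI)
  fix x y assume x: "x \<in> carrier (Z3n n)" and y: "y \<in> carrier (Z3n n)"
  show "x \<otimes>\<^bsub>Z3n n\<^esub> y \<in> carrier (Z3n n)"
    unfolding Z3_mem Z3_mult by auto
  show "x \<otimes>\<^bsub>Z3n n\<^esub> y = y \<otimes>\<^bsub>Z3n n\<^esub> x" unfolding Z3_mult by (auto simp: add.commute)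
next
  show "\<one>\<^bsub>Z3n n\<^esub> \<in> carrier (Z3n n)" unfolding Z3_mem Z3_one by auto
next
  fix x y z
  show "x \<otimes>\<^bsub>Z3n n\<^esub> y \<otimes>\<^bsub>Z3n n\<^esub> z = x \<otimes>\<^bsub>Z3n n\<^esub> (y \<otimes>\<^bsub>Z3n n\<^esub> z)"
    unfolding Z3_mult by (auto simp: mod_add_left_eq mod_add_right_eq add.assoc)
next
  fix x assume x: "x \<in> carrier (Z3n n)"
  show "\<one>\<^bsub>Z3n n\<^esub> \<otimes>\<^bsub>Z3n n\<^esub> x = x"
    unfolding Z3_mult Z3_one using x unfolding Z3_mem by (auto simp: fun_eq_iff)
  show "\<exists>y\<in>carrier (Z3n n). y \<otimes>\<^bsub>Z3n n\<^esub> x = \<one>\<^bsub>Z3n n\<^esub>"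
  proof (intro bexI)
    show "(\<lambda>i. if i < n then x i * 2 mod 3 else 0) \<otimes>\<^bsub>Z3n n\<^esub> x = \<one>\<^bsub>Z3n n\<^esub>"
      unfolding Z3_mult Z3_one using x unfolding Z3_mem by (auto simp: fun_eq_iff)
    show "(\<lambda>i. if i < n then x i * 2 mod 3 else 0) \<in> carrier (Z3n n)"
      unfolding Z3_mem by auto
  qed
qed

lemma Z3_cube: "x \<in> carrier (Z3n n) \<Longrightarrow> x \<otimes>\<^bsub>Z3n n\<^esub> x = inv\<^bsub>Z3n n\<^esub> x"
proof -
  assume x: "x \<in> carrier (Z3n n)"
  interpret comm_group "Z3n n" by (rule Z3_comm_group)
  have "x \<otimes>\<^bsub>Z3n n\<^esub> x \<otimes>\<^bsub>Z3n n\<^esub> x = \<one>\<^bsub>Z3n n\<^esub>"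
    unfolding Z3_mult Z3_one using x unfolding Z3_mem by (auto simp: fun_eq_iff)
  hence "inv\<^bsub>Z3n n\<^esub> x = x \<otimes>\<^bsub>Z3n n\<^esub> x" using x by (intro inv_equality) auto
  thus ?thesis by simp
qed

lemma Z3_finite: "finite (carrier (Z3n n))"
proof -
  have "carrier (Z3n n) \<subseteq> (\<lambda>g i. if i < n then g i else 0) ` (PiE {..<n} (\<lambda>_. {0::int,1,2}))"
  proof
    fix f assume f: "f \<in> carrier (Z3n n)"
    show "f \<in> (\<lambda>g i. if i < n then g i else 0) ` (PiE {..<n} (\<lambda>_. {0::int,1,2}))"
      apply (rule image_eqI[where x="restrict f {..<n}"])
      using f unfolding Z3_mem by (auto simp: fun_eq_iff)
  qed
  thus ?thesis by (rule finite_subset) (auto intro: finite_PiE)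
qed
context comm_group begin

lemma sf_disj:
  assumes cube: "\<And>y. y \<in> carrier G \<Longrightarrow> y \<otimes> y = inv y"
    and sf: "sum_free G S" and x: "x \<in> S"
  shows "(S \<inter> (inv x <# S) = {} \<and> S \<inter> (x <# S) = {} \<and> (inv x <# S) \<inter> (x <# S) = {})
       \<and> (S \<inter> (S <#> set_inv S) = {} \<and> S \<inter> set_inv S = {} \<and> (S <#> set_inv S) \<inter> set_inv S = {})"
proof -
  have SC: "S \<subseteq> carrier G" and nf: "\<And>a b. a \<in> S \<Longrightarrow> b \<in> S \<Longrightarrow> a \<otimes> b \<notin> S"
    using sf unfolding sum_free_def by auto
  have xc: "x \<in> carrier G" using x SC by auto
  have 1: "S \<inter> (inv x <# S) = {}"
  proof (rule ccontr)
    assume "S \<inter> (inv x <# S) \<noteq> {}"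
    then obtain s where s: "s \<in> S" "inv x \<otimes> s \<in> S" unfolding l_coset_def by auto
    have sc: "s \<in> carrier G" using s SC by auto
    have "x \<otimes> (inv x \<otimes> s) = s" using sc xc by (simp add: m_assoc[symmetric])
    thus False using nf[OF x s(2)] s by simp
  qed
  have 2: "S \<inter> (x <# S) = {}" using nf x unfolding l_coset_def by auto
  have 3: "(inv x <# S) \<inter> (x <# S) = {}"
  proof (rule ccontr)
    assume "(inv x <# S) \<inter> (x <# S) \<noteq> {}"
    then obtain s t where st: "s \<in> S" "t \<in> S" "inv x \<otimes> s = x \<otimes> t" unfolding l_coset_def by auto
    have sc: "s \<in> carrier G" and tc: "t \<in> carrier G" using st SC by auto
    have "s = x \<otimes> (inv x \<otimes> s)" using sc xc by (simp add: m_assoc[symmetric])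
    also have "\<dots> = x \<otimes> x \<otimes> t" using st(3) xc tc by (simp add: m_assoc)
    also have "\<dots> = inv x \<otimes> t" using cube xc by simp
    finally have "x \<otimes> s = t" using sc xc tc by (simp add: m_assoc[symmetric])
    thus False using nf[OF x st(1)] st by simp
  qed
  have 4: "S \<inter> (S <#> set_inv S) = {}"
  proof (rule ccontr)
    assume "S \<inter> (S <#> set_inv S) \<noteq> {}"
    then obtain a b where ab: "a \<in> S" "b \<in> S" "a \<otimes> inv b \<in> S" unfolding set_mult_def SET_INV_def by auto
    have "a \<in> carrier G" "b \<in> carrier G" using ab SC by auto
    hence "a \<otimes> inv b \<otimes> b = a" by (simp add: m_assoc)
    thus False using nf[OF ab(3) ab(2)] ab by simp
  qed
  have 5: "S \<inter> set_inv S = {}"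
  proof (rule ccontr)
    assume "S \<inter> set_inv S \<noteq> {}"
    then obtain t where t: "t \<in> S" "inv t \<in> S" unfolding SET_INV_def by auto
    thus False using nf[OF t(1) t(1)] cube[of t] SC by auto
  qed
  have 6: "(S <#> set_inv S) \<inter> set_inv S = {}"
  proof (rule ccontr)
    assume "(S <#> set_inv S) \<inter> set_inv S \<noteq> {}"
    then obtain a b c where abc: "a \<in> S" "b \<in> S" "c \<in> S" "a \<otimes> inv b = inv c"
      unfolding set_mult_def SET_INV_def by (auto simp: eq_commute)
    have ac: "a \<in> carrier G" "b \<in> carrier G" "c \<in> carrier G" using abc SC by auto
    have "a \<otimes> c = a \<otimes> inv b \<otimes> b \<otimes> c" using ac by (simp add: m_assoc)
    also have "\<dots> = inv c \<otimes> b \<otimes> c" using abc by simp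
    also have "\<dots> = b" using ac by (metis inv_closed l_inv m_assoc m_comm r_one)
    finally show False using nf[OF abc(1) abc(3)] abc by simp
  qed
  show ?thesis using 1 2 3 4 5 6 by blast
qed

lemma card_lcos: assumes "x \<in> carrier G" "S \<subseteq> carrier G" shows "card (x <# S) = card S"
proof -
  have "x <# S = (\<lambda>s. x \<otimes> s) ` S" unfolding l_coset_def by auto
  moreover have "inj_on (\<lambda>s. x \<otimes> s) S" using assms by (auto intro!: inj_onI simp: subset_iff)
  ultimately show ?thesis by (simp add: card_image)
qed

lemma card_rcos: assumes "x \<in> carrier G" "S \<subseteq> carrier G" shows "card (S #> x) = card S"
proof -
  have "S #> x = (\<lambda>s. s \<otimes> x) ` S" unfolding r_coset_def by auto
  moreover have "inj_on (\<lambda>s. s \<otimes> x) S" using assms by (auto intro!: inj_onI simp: subset_iff)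
  ultimately show ?thesis by (simp add: card_image)
qed

lemma card_sinv: assumes "S \<subseteq> carrier G" shows "card (set_inv S) = card S"
proof -
  have "set_inv S = (\<lambda>s. inv s) ` S" unfolding SET_INV_def by auto
  moreover have "inj_on (\<lambda>s. inv s) S" using assms by (auto intro!: inj_onI)
  ultimately show ?thesis by (simp add: card_image)
qed

end

lemma card_union3:
  assumes "finite A" "finite B" "finite C" "A \<inter> B = {}" "A \<inter> C = {}" "B \<inter> C = {}"
  shows "card (A \<union> B \<union> C) = card A + card B + card C"
  using assms by (simp add: card_Un_disjoint Int_Un_distrib2)

theorem lemma1:
  fixes n :: nat and S :: "(nat \<Rightarrow> int) set" and x :: "nat \<Rightarrow> int"
  defines "G \<equiv> Z3n n"
  assumes "sum_free G S" and "x \<in> S"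
  shows "(S \<inter> (inv\<^bsub>G\<^esub> x <#\<^bsub>G\<^esub> S) = {}
         \<and> S \<inter> (x <#\<^bsub>G\<^esub> S) = {}
         \<and> (inv\<^bsub>G\<^esub> x <#\<^bsub>G\<^esub> S) \<inter> (x <#\<^bsub>G\<^esub> S) = {})
       \<and> (S \<inter> (S <#>\<^bsub>G\<^esub> set_inv\<^bsub>G\<^esub> S) = {}
         \<and> S \<inter> set_inv\<^bsub>G\<^esub> S = {}
         \<and> (S <#>\<^bsub>G\<^esub> set_inv\<^bsub>G\<^esub> S) \<inter> set_inv\<^bsub>G\<^esub> S = {})
       \<and> (max_sum_free G S \<longrightarrow>
           S \<union> (inv\<^bsub>G\<^esub> x <#\<^bsub>G\<^esub> S) \<union> (x <#\<^bsub>G\<^esub> S) = carrier G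
           \<and> real (card S) = real (card (carrier G)) / 3)
       \<and> (max_sum_free G S \<longrightarrow>
           S \<union> (S <#>\<^bsub>G\<^esub> set_inv\<^bsub>G\<^esub> S) \<union> set_inv\<^bsub>G\<^esub> S = carrier G)"
proof -
  interpret comm_group G unfolding G_def by (rule Z3_comm_group)
  have cube: "\<And>y. y \<in> carrier G \<Longrightarrow> y \<otimes>\<^bsub>G\<^esub> y = inv\<^bsub>G\<^esub> y"
    unfolding G_def by (rule Z3_cube)
  have fin: "finite (carrier G)" unfolding G_def by (rule Z3_finite)
  note D = sf_disj[OF cube assms(2,3)]
  have SC: "S \<subseteq> carrier G" and nf: "\<And>a b. a \<in> S \<Longrightarrow> b \<in> S \<Longrightarrow> a \<otimes>\<^bsub>G\<^esub> b \<notin> S"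
    using assms(2) unfolding sum_free_def by auto
  have xc: "x \<in> carrier G" using SC assms(3) by auto
  have finS: "finite S" using fin SC finite_subset by auto
  have c1: "inv\<^bsub>G\<^esub> x <#\<^bsub>G\<^esub> S \<subseteq> carrier G" "x <#\<^bsub>G\<^esub> S \<subseteq> carrier G"
    using SC xc unfolding l_coset_def by auto
  have c2: "S <#>\<^bsub>G\<^esub> set_inv\<^bsub>G\<^esub> S \<subseteq> carrier G" "set_inv\<^bsub>G\<^esub> S \<subseteq> carrier G"
    using SC unfolding set_mult_def SET_INV_def by auto
  have le3: "3 * card S \<le> card (carrier G)"
  proof -
    have "card (S \<union> (inv\<^bsub>G\<^esub> x <#\<^bsub>G\<^esub> S) \<union> (x <#\<^bsub>G\<^esub> S)) = 3 * card S"
      using D c1 SC xc fin finS by (subst card_union3) (auto intro: finite_subset simp: card_lcos)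
    moreover have "card (S \<union> (inv\<^bsub>G\<^esub> x <#\<^bsub>G\<^esub> S) \<union> (x <#\<^bsub>G\<^esub> S)) \<le> card (carrier G)"
      using c1 SC fin by (intro card_mono) auto
    ultimately show ?thesis by simp
  qed
  have main: "3 * card S = card (carrier G)" if M: "max_sum_free G S"
  proof -
    have "n \<noteq> 0"
    proof
      assume n0: "n = 0"
      obtain s where s: "s \<in> S" using assms(3) by auto
      have "s \<in> carrier (Z3n 0)" using s SC n0 G_def by auto
      hence "s = (\<lambda>i. 0)" unfolding Z3_mem by (auto simp: fun_eq_iff)
      moreover have "(\<lambda>i. 0::int) \<otimes>\<^bsub>G\<^esub> (\<lambda>i. 0) = (\<lambda>i. 0)" unfolding G_def Z3_mult n0 by simp
      ultimately show False using nf[OF s s] s by simp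
    qed
    hence n1: "0 < n" by simp
    define e :: "nat \<Rightarrow> int" where "e = (\<lambda>i. if i = 0 then 1 else 0)"
    define e2 :: "nat \<Rightarrow> int" where "e2 = (\<lambda>i. if i = 0 then 2 else 0)"
    define T where "T = {f \<in> carrier G. f 0 = 1}"
    have ec: "e \<in> carrier G" "e2 \<in> carrier G" unfolding G_def Z3_mem e_def e2_def using n1 by auto
    have "e2 \<otimes>\<^bsub>G\<^esub> e = \<one>\<^bsub>G\<^esub>" unfolding G_def Z3_mult Z3_one e_def e2_def by (auto simp: fun_eq_iff)
    hence inve: "inv\<^bsub>G\<^esub> e = e2" using ec by (intro inv_equality) auto
    have TC: "T \<subseteq> carrier G" unfolding T_def by auto
    have sfT: "sum_free G T" unfolding sum_free_def
    proof (intro conjI ballI)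
      show "T \<noteq> {}" using ec n1 unfolding T_def e_def by auto
      show "T \<subseteq> carrier G" by (rule TC)
      fix a b assume "a \<in> T" "b \<in> T"
      thus "a \<otimes>\<^bsub>G\<^esub> b \<notin> T" using n1 unfolding T_def G_def Z3_mult by auto
    qed
    have cov: "carrier G \<subseteq> T \<union> (inv\<^bsub>G\<^esub> e <#\<^bsub>G\<^esub> T) \<union> (e <#\<^bsub>G\<^esub> T)"
    proof
      fix f assume f: "f \<in> carrier G"
      have "f 0 \<in> {0,1,2}" using f n1 unfolding G_def Z3_mem by auto
      moreover
      { assume f0: "f 0 = 0"
        have "e \<otimes>\<^bsub>G\<^esub> f \<in> carrier G" using f ec by simp
        moreover have "(e \<otimes>\<^bsub>G\<^esub> f) 0 = 1" using f0 n1 by (simp add: G_def Z3_mult e_def)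
        ultimately have "e \<otimes>\<^bsub>G\<^esub> f \<in> T" unfolding T_def by auto
        moreover have "f = inv\<^bsub>G\<^esub> e \<otimes>\<^bsub>G\<^esub> (e \<otimes>\<^bsub>G\<^esub> f)"
          using f ec by (simp add: m_assoc[symmetric])
        ultimately have "f \<in> inv\<^bsub>G\<^esub> e <#\<^bsub>G\<^esub> T" unfolding l_coset_def by auto }
      moreover
      { assume f0: "f 0 = 2"
        have "e2 \<otimes>\<^bsub>G\<^esub> f \<in> carrier G" using f ec by simp
        moreover have "(e2 \<otimes>\<^bsub>G\<^esub> f) 0 = 1" using f0 n1 by (simp add: G_def Z3_mult e2_def)
        ultimately have "e2 \<otimes>\<^bsub>G\<^esub> f \<in> T" unfolding T_def by auto
        moreover have "f = e \<otimes>\<^bsub>G\<^esub> (inv\<^bsub>G\<^esub> e \<otimes>\<^bsub>G\<^esub> f)"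
          using f ec by (simp add: m_assoc[symmetric])
        ultimately have "f \<in> e <#\<^bsub>G\<^esub> T" unfolding l_coset_def inve by auto }
      ultimately show "f \<in> T \<union> (inv\<^bsub>G\<^esub> e <#\<^bsub>G\<^esub> T) \<union> (e <#\<^bsub>G\<^esub> T)" unfolding T_def using f by auto
    qed
    have finT: "finite T" using fin TC finite_subset by auto
    have "card (carrier G) \<le> card (T \<union> (inv\<^bsub>G\<^esub> e <#\<^bsub>G\<^esub> T) \<union> (e <#\<^bsub>G\<^esub> T))"
      using cov finT by (intro card_mono) (auto simp: l_coset_def)
    also have "\<dots> \<le> card T + card (inv\<^bsub>G\<^esub> e <#\<^bsub>G\<^esub> T) + card (e <#\<^bsub>G\<^esub> T)"
      by (meson card_Un_le add_right_mono le_trans)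
    also have "\<dots> = 3 * card T" using ec TC by (simp add: card_lcos)
    also have "\<dots> \<le> 3 * card S" using M sfT unfolding max_sum_free_def by auto
    finally show ?thesis using le3 by simp
  qed
  have iii: "S \<union> (inv\<^bsub>G\<^esub> x <#\<^bsub>G\<^esub> S) \<union> (x <#\<^bsub>G\<^esub> S) = carrier G
           \<and> real (card S) = real (card (carrier G)) / 3" if M: "max_sum_free G S"
  proof
    have "card (S \<union> (inv\<^bsub>G\<^esub> x <#\<^bsub>G\<^esub> S) \<union> (x <#\<^bsub>G\<^esub> S)) = 3 * card S"
      using D c1 SC xc fin finS by (subst card_union3) (auto intro: finite_subset simp: card_lcos)
    thus "S \<union> (inv\<^bsub>G\<^esub> x <#\<^bsub>G\<^esub> S) \<union> (x <#\<^bsub>G\<^esub> S) = carrier G"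
      using main[OF M] c1 SC fin by (intro card_subset_eq) auto
    show "real (card S) = real (card (carrier G)) / 3" using main[OF M]
      by (metis nonzero_mult_div_cancel_left of_nat_mult of_nat_numeral zero_neq_numeral)
  qed
  have iv: "S \<union> (S <#>\<^bsub>G\<^esub> set_inv\<^bsub>G\<^esub> S) \<union> set_inv\<^bsub>G\<^esub> S = carrier G" if M: "max_sum_free G S"
  proof -
    have sub: "S #>\<^bsub>G\<^esub> inv\<^bsub>G\<^esub> x \<subseteq> S <#>\<^bsub>G\<^esub> set_inv\<^bsub>G\<^esub> S"
      using assms(3) unfolding r_coset_def set_mult_def SET_INV_def by auto
    have "card (S \<union> (S #>\<^bsub>G\<^esub> inv\<^bsub>G\<^esub> x) \<union> set_inv\<^bsub>G\<^esub> S) = 3 * card S"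
      using D c2 sub SC xc fin finS
      by (subst card_union3) (auto intro: finite_subset simp: card_rcos card_sinv)
    hence "S \<union> (S #>\<^bsub>G\<^esub> inv\<^bsub>G\<^esub> x) \<union> set_inv\<^bsub>G\<^esub> S = carrier G"
      using main[OF M] c2 sub SC fin by (intro card_subset_eq) auto
    thus ?thesis using sub c2 SC by blast
  qed
  show ?thesis using D iii iv by blast
qed

end
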